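(* Let $G$ be a finite abelian group and let $f$ be an automorphism of the monoid $\mathcal{P}_{0}(G)$. Then $f$ maps every $2$-element set in $\mathcal{P}_{0}(G)$ to a $2$-element set.
   Context: For an additively written finite abelian group $G$, $\mathcal{P}_{0}(G)$ is the monoid of all subsets of $G$ containing $0$, with setwise addition $X+Y=\{x+y : x\in X, y\in Y\}$ and identity $\{0\}$. *)

theory Defs
  imports Main "HOL-Library.Set_Algebras"
begin

text \<open>Setwise addition X + Y = {x + y. x in X, y in Y} is the instance from Set_Algebras.\<close>

definition P0 :: "'a::zero set set" where
  "P0 = {X. 0 \<in> X}"

definition P0_automorphism :: "('a::{zero,plus} set \<Rightarrow> 'a set) \<Rightarrow> bool" where
  "P0_automorphism f \<longleftrightarrow>
     bij_betw f P0 P0 \<and>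
     (\<forall>X\<in>P0. \<forall>Y\<in>P0. f (X + Y) = f X + f Y) \<and>
     f {0} = {0}"

end

theory Submission
  imports Defs
begin

fun itp :: "nat \<Rightarrow> 'a::comm_monoid_add set \<Rightarrow> 'a set" where
  "itp 0 Z = {0}"
| "itp (Suc k) Z = itp k Z + Z"

lemma zero_itp: "0 \<in> Z \<Longrightarrow> (0::'a::comm_monoid_add) \<in> itp k Z"
proof (induction k)
  case (Suc k)
  have "(0::'a) + 0 \<in> itp k Z + Z" using Suc by (intro set_plus_intro)
  then show ?case by simp
qed simp

lemma itp_one: "itp (Suc 0) (Z::'a::comm_monoid_add set) = Z"
  by simp

lemma stable_itp:
  fixes Z :: "'a::comm_monoid_add set"
  assumes "itp k Z + Z = itp k Z"
  shows "itp k Z + itp j Z = itp k Z"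
proof (induction j)
  case 0 then show ?case by simp
next
  case (Suc j)
  have "itp k Z + itp (Suc j) Z = (itp k Z + itp j Z) + Z" by (simp add: add.assoc)
  also have "\<dots> = itp k Z" using Suc assms by simp
  finally show ?case .
qed

lemma growth:
  fixes Z :: "'a::{comm_monoid_add,finite} set"
  assumes "0 \<in> Z" and "\<forall>i<k. itp i Z + Z \<noteq> itp i Z" and "j \<le> k"
  shows "card (itp j Z) + (k - j) \<le> card (itp k Z)"
  using assms(2,3)
proof (induction k)
  case 0 then show ?case by simp
next
  case (Suc k)
  show ?case
  proof (cases "j = Suc k")
    case True then show ?thesis by simp
  next
    case False
    then have jk: "j \<le> k" using Suc by simp
    have IH: "card (itp j Z) + (k - j) \<le> card (itp k Z)" using Suc jk by simp
    have sub: "itp k Z \<subseteq> itp k Z + Z"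
      by (metis add.commute set_zero_plus2[OF assms(1)])
    have ne: "itp k Z + Z \<noteq> itp k Z" using Suc.prems by simp
    have "card (itp k Z) < card (itp k Z + Z)"
      using sub ne by (simp add: psubset_card_mono psubset_eq)
    then show ?thesis using IH jk by simp
  qed
qed

lemma itp_two:
  fixes a :: "'a::ab_group_add"
  shows "itp k {0, a} = (\<lambda>i. ((+) a ^^ i) 0) ` {..k}"
proof (induction k)
  case 0 then show ?case by simp
next
  case (Suc k)
  have "itp (Suc k) {0, a} = itp k {0,a} + {0, a}" by simp
  also have "\<dots> = itp k {0,a} \<union> ((+) a) ` itp k {0,a}"
  proof -
    have "{0,a} = insert a {0::'a}" by auto
    then show ?thesis using set_plus_insert[of "itp k {0,a}" a "{0}"] by simp
  qed
  also have "\<dots> = (\<lambda>i. ((+) a ^^ i) 0) ` {..Suc k}"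
  proof -
    have "(\<lambda>i. ((+) a ^^ i) 0) ` {..Suc k} = (\<lambda>i. ((+) a ^^ i) 0) ` {..k} \<union> (\<lambda>i. ((+) a ^^ i) 0) ` Suc ` {..k}"
    proof -
      have "{..Suc k} = {..k} \<union> Suc ` {..k}"
      proof (intro set_eqI iffI)
        fix i assume "i \<in> {..Suc k}"
        then show "i \<in> {..k} \<union> Suc ` {..k}"
        proof (cases "i \<le> k")
          case False
          then have "i = Suc k" using \<open>i \<in> {..Suc k}\<close> by simp
          then show ?thesis by blast
        qed simp
      qed auto
      then show ?thesis by (simp only: image_Un)
    qed
    also have "(\<lambda>i. ((+) a ^^ i) 0) ` Suc ` {..k} = ((+) a) ` ((\<lambda>i. ((+) a ^^ i) 0) ` {..k})"
      by (auto simp only: image_image funpow.simps comp_def)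
    finally show ?thesis unfolding Suc.IH by (rule sym)
  qed
  finally show ?case .
qed

lemma card_itp_two:
  fixes a :: "'a::ab_group_add"
  shows "card (itp k {0, a}) \<le> k + 1"
  unfolding itp_two by (rule order_trans[OF card_image_le]) simp_all

lemma P0_plus:
  fixes X :: "'a::comm_monoid_add set"
  assumes "X \<in> P0" "Y \<in> P0" shows "X + Y \<in> P0"
proof -
  have "(0::'a) + 0 \<in> X + Y" using assms by (intro set_plus_intro) (auto simp: P0_def)
  then show ?thesis by (simp add: P0_def)
qed

lemma divisors_idem:
  fixes H :: "'a::comm_monoid_add set"
  assumes "0 \<in> H" "H + H = H"
  shows "{Y\<in>P0. \<exists>Z\<in>P0. Y + Z = H} = {Y. 0 \<in> Y \<and> Y \<subseteq> H}"
proof (intro set_eqI iffI)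
  fix Y assume "Y \<in> {Y\<in>P0. \<exists>Z\<in>P0. Y + Z = H}"
  then obtain Z where "0 \<in> Y" "0 \<in> Z" "Y + Z = H" by (auto simp: P0_def)
  then show "Y \<in> {Y. 0 \<in> Y \<and> Y \<subseteq> H}"
    using set_zero_plus2[of Z Y] by (auto simp: add.commute)
next
  fix Y assume Y: "Y \<in> {Y. 0 \<in> Y \<and> Y \<subseteq> H}"
  have "Y + H \<subseteq> H + H" using Y by (intro set_plus_mono2) auto
  moreover have "H \<subseteq> Y + H" using Y set_zero_plus2 by auto
  ultimately have "Y + H = H" using assms by auto
  then show "Y \<in> {Y\<in>P0. \<exists>Z\<in>P0. Y + Z = H}" using Y assms by (auto simp: P0_def)
qed

lemma card_sub0:
  fixes H :: "'a::zero set"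
  assumes "finite H" "0 \<in> H"
  shows "card {Y. (0::'a) \<in> Y \<and> Y \<subseteq> H} = 2 ^ (card H - 1)"
proof -
  have "bij_betw (\<lambda>Y. Y - {0}) {Y. 0 \<in> Y \<and> Y \<subseteq> H} (Pow (H - {0}))"
    by (rule bij_betw_byWitness[where f'="insert 0"]) (auto simp: assms)
  then have "card {Y. 0 \<in> Y \<and> Y \<subseteq> H} = card (Pow (H - {0}))" by (rule bij_betw_same_card)
  also have "\<dots> = 2 ^ (card H - 1)" using assms by (simp add: card_Pow)
  finally show ?thesis .
qed

lemma aut_card_idem:
  fixes f :: "('a::{comm_monoid_add, finite}) set \<Rightarrow> 'a set"
  assumes f: "P0_automorphism f" and H: "0 \<in> H" "H + H = H"
  shows "card (f H) = card H"
proof -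
  have bij: "bij_betw f P0 P0" and hom: "\<forall>X\<in>P0. \<forall>Y\<in>P0. f (X + Y) = f X + f Y"
    using f by (auto simp: P0_automorphism_def)
  have HP: "H \<in> P0" using H by (simp add: P0_def)
  have fHP: "f H \<in> P0" using bij HP by (auto simp: bij_betw_def)
  have "f H + f H = f (H + H)" using hom HP by simp
  then have fH: "0 \<in> f H" "f H + f H = f H" using fHP H by (auto simp: P0_def)
  let ?D = "\<lambda>K. {Y\<in>P0. \<exists>Z\<in>P0. Y + Z = K}"
  have inj: "inj_on f P0" using bij by (auto simp: bij_betw_def)
  have img: "f ` ?D H = ?D (f H)"
  proof (intro set_eqI iffI)
    fix W assume "W \<in> f ` ?D H"
    then obtain Y Z where "Y \<in> P0" "Z \<in> P0" "Y + Z = H" "W = f Y" by auto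
    then have "f Y \<in> P0" "f Z \<in> P0" "f Y + f Z = f H" "W = f Y"
      using hom bij by (auto simp: bij_betw_def)
    then show "W \<in> ?D (f H)" by blast
  next
    fix W assume "W \<in> ?D (f H)"
    then obtain V where W: "W \<in> P0" "V \<in> P0" "W + V = f H" by auto
    obtain Y where Y: "Y \<in> P0" "W = f Y" using W bij by (metis bij_betw_def imageE)
    obtain Z where Z: "Z \<in> P0" "V = f Z" using W bij by (metis bij_betw_def imageE)
    have YZ: "Y + Z \<in> P0" using Y Z by (intro P0_plus)
    have "f (Y + Z) = f H" using hom Y Z W by simp
    then have "Y + Z = H" using inj YZ HP by (auto dest: inj_onD)
    then show "W \<in> f ` ?D H" using Y Z by auto
  qed
  have "card (?D H) = card (?D (f H))"
  proof -
    have "inj_on f (?D H)" using inj by (rule inj_on_subset) auto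
    then have "card (f ` ?D H) = card (?D H)" by (rule card_image)
    then show ?thesis using img by simp
  qed
  then have "(2::nat) ^ (card H - 1) = 2 ^ (card (f H) - 1)"
    using divisors_idem[OF H] divisors_idem[OF fH] card_sub0[OF _ H(1)] card_sub0[OF _ fH(1)] by simp
  then have "card H - 1 = card (f H) - 1" by simp
  moreover have "H \<noteq> {}" "f H \<noteq> {}" using H fH by auto
  then have "card H \<ge> 1" "card (f H) \<ge> 1" by (simp_all add: Suc_le_eq card_gt_0_iff)
  ultimately show ?thesis by simp
qed

theorem lemma2p3:
  fixes f :: "('a::{ab_group_add, finite}) set \<Rightarrow> 'a set"
  assumes "P0_automorphism f"
    and "X \<in> P0"
    and "card X = 2"
  shows "card (f X) = 2"
proof -
  have bij: "bij_betw f P0 P0" and hom: "\<forall>X\<in>P0. \<forall>Y\<in>P0. f (X + Y) = f X + f Y"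
    and f0: "f {0} = {0}"
    using assms(1) by (auto simp: P0_automorphism_def)
  have inj: "inj_on f P0" using bij by (auto simp: bij_betw_def)
  have X0: "0 \<in> X" using assms(2) by (simp add: P0_def)
  obtain x y where xy: "X = {x, y}" "x \<noteq> y" using assms(3) by (auto simp: card_2_iff)
  obtain a where Xa: "X = {0, a}" and a0: "a \<noteq> 0"
  proof (cases "x = 0")
    case True then show ?thesis using that xy by auto
  next
    case False then have "y = 0" using X0 xy by auto
    then show ?thesis using that[of x] xy False by auto
  qed
  define Y where "Y = f X"
  have YP: "Y \<in> P0" using bij assms(2) by (auto simp: bij_betw_def Y_def)
  have Y0: "0 \<in> Y" using YP by (simp add: P0_def)
  have P0_0: "{0} \<in> P0" by (simp add: P0_def)
  have Yne: "Y \<noteq> {0}"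
  proof
    assume "Y = {0}"
    then have "f X = f {0}" using f0 Y_def by simp
    then have "X = {0}" using inj assms(2) P0_0 by (auto dest: inj_onD)
    then show False using Xa a0 by auto
  qed
  have cY: "card Y \<ge> 2"
  proof -
    obtain b where "b \<in> Y" "b \<noteq> 0" using Yne Y0 by auto
    then have "{0, b} \<subseteq> Y" using Y0 by auto
    then have "card {0,b} \<le> card Y" by (simp add: card_mono)
    then show ?thesis using \<open>b \<noteq> 0\<close> by simp
  qed
  have itpP: "\<And>k Z. Z \<in> P0 \<Longrightarrow> itp k Z \<in> P0" using zero_itp by (auto simp: P0_def)
  have fitp: "f (itp k X) = itp k Y" for k
  proof (induction k)
    case 0 then show ?case using f0 by simp
  next
    case (Suc k)
    then show ?case using hom itpP[OF assms(2)] assms(2) Y_def by simp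
  qed
  have stab: "(itp k X + X = itp k X) \<longleftrightarrow> (itp k Y + Y = itp k Y)" for k
  proof -
    have "itp k X + X \<in> P0" using itpP[OF assms(2), of "Suc k"] by simp
    then have "(itp k X + X = itp k X) \<longleftrightarrow> f (itp k X + X) = f (itp k X)"
      using inj itpP[OF assms(2)] by (auto dest: inj_onD)
    also have "\<dots> \<longleftrightarrow> (itp k Y + Y = itp k Y)"
      using hom itpP[OF assms(2)] assms(2) fitp Y_def by simp
    finally show ?thesis .
  qed
  have ex: "\<exists>k. itp k X + X = itp k X"
  proof (rule ccontr)
    assume "\<not> ?thesis"
    then have "\<forall>i<card (UNIV::'a set). itp i X + X \<noteq> itp i X" by auto
    from growth[OF X0 this, of 0] have "1 + card (UNIV::'a set) \<le> card (itp (card (UNIV::'a set)) X)" by simp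
    moreover have "card (itp (card (UNIV::'a set)) X) \<le> card (UNIV::'a set)" by (simp add: card_mono)
    ultimately show False by simp
  qed
  define s where "s = (LEAST k. itp k X + X = itp k X)"
  have sst: "itp s X + X = itp s X" unfolding s_def using ex by (rule LeastI_ex)
  have sl: "\<forall>i<s. itp i X + X \<noteq> itp i X" unfolding s_def using not_less_Least by blast
  have s1: "s \<ge> 1"
  proof (rule ccontr)
    assume "\<not> s \<ge> 1"
    then have "s = 0" by simp
    then show False using sst Xa a0 by simp
  qed
  have slY: "\<forall>i<s. itp i Y + Y \<noteq> itp i Y" using sl stab by blast
  have gY: "card (itp 1 Y) + (s - 1) \<le> card (itp s Y)" using growth[OF Y0 slY s1] .
  have idem: "itp s X + itp s X = itp s X" using stable_itp[OF sst] .
  have cc: "card (itp s Y) = card (itp s X)"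
    using aut_card_idem[OF assms(1) zero_itp[OF X0] idem] fitp by simp
  have "card (itp s X) \<le> s + 1" using card_itp_two Xa by simp
  then have "card Y \<le> 2" using gY cc s1 by simp
  then show ?thesis using cY Y_def by simp
qed

end
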